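(* Under the assumptions $\max_{i,j}|A_{ij}|\le1$ and $|\xi^{(t)}|\le1$ for all $t$, let $p^{(T)}=\frac1T\sum_{t=1}^{T}e^{(i^{(t)})}$ be the empirical distribution of the arms chosen by the Influential LCB algorithm in rounds $1,\dots,T$, and let $\mathcal L_2(p)=\frac12p^\top Ap$. Then for every $T\ge K+1$, $$\mathcal L_2(p^{(T)})-\min_{p\in\Delta_K}\mathcal L_2(p)\;\le\;\frac{5K+1}{2T}+\big(2K+2\|l^{(1)}\|_\infty+4\big)\frac{\log T}{T},$$ where $\Delta_K=\{p\in\mathbb{R}^K: p\ge0,\ \sum_ip_i=1\}$.
   Context: Influential bandit problem: $K$ arms, symmetric positive semi-definite $A\in\mathbb{R}^{K\times K}$, initial loss vector $l^{(1)}\in\mathbb{R}^K$; at round $t$ the algorithm chooses $i^{(t)}$, observes $L^{(t)}=l^{(t)}_{i^{(t)}}+\xi^{(t)}$, and $l^{(t+1)}_j=l^{(t)}_j+A_{i^{(t)}j}$ for all $j$. Influential LCB algorithm: initialize $c^{(1)}_i=0$, $\hat l^{(1)}_i=-\infty$; at round $t$ choose $i^{(t)}\in\arg\min_i(\hat l^{(t)}_i-c^{(t)}_i)$, then set $\hat l^{(t+1)}_{i^{(t)}}=L^{(t)}$, $\hat l^{(t+1)}_i=\hat l^{(t)}_i$ otherwise, and $c^{(t+1)}_{i^{(t)}}=1$, $c^{(t+1)}_i=c^{(t)}_i+1$ otherwise. $e^{(i)}$ is the $i$-th standard basis vector; $\log$ is the natural logarithm. *)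

theory Defs
  imports "HOL-Analysis.Analysis"
begin

text \<open>Arms are indexed by natural numbers i < K. Rounds are numbered t = 1, 2, ...
  The choice sequence ch t is the arm chosen in round t. The states below are indexed
  by n = t - 1, i.e. the value at index n is the quantity with superscript (n+1)
  in the paper.\<close>

primrec loss_vec :: "(nat \<Rightarrow> nat \<Rightarrow> real) \<Rightarrow> (nat \<Rightarrow> real) \<Rightarrow> (nat \<Rightarrow> nat) \<Rightarrow> nat \<Rightarrow> nat \<Rightarrow> real" where
  "loss_vec A l1 ch 0 j = l1 j"
| "loss_vec A l1 ch (Suc n) j = loss_vec A l1 ch n j + A (ch (Suc n)) j"

definition obs :: "(nat \<Rightarrow> nat \<Rightarrow> real) \<Rightarrow> (nat \<Rightarrow> real) \<Rightarrow> (nat \<Rightarrow> real) \<Rightarrow> (nat \<Rightarrow> nat) \<Rightarrow> nat \<Rightarrow> real" where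
  "obs A l1 \<xi> ch t = loss_vec A l1 ch (t - 1) (ch t) + \<xi> t"

primrec lhat :: "(nat \<Rightarrow> nat \<Rightarrow> real) \<Rightarrow> (nat \<Rightarrow> real) \<Rightarrow> (nat \<Rightarrow> real) \<Rightarrow> (nat \<Rightarrow> nat) \<Rightarrow> nat \<Rightarrow> nat \<Rightarrow> ereal" where
  "lhat A l1 \<xi> ch 0 i = -\<infinity>"
| "lhat A l1 \<xi> ch (Suc n) i =
     (if ch (Suc n) = i then ereal (obs A l1 \<xi> ch (Suc n)) else lhat A l1 \<xi> ch n i)"

primrec cnt :: "(nat \<Rightarrow> nat) \<Rightarrow> nat \<Rightarrow> nat \<Rightarrow> nat" where
  "cnt ch 0 i = 0"
| "cnt ch (Suc n) i = (if ch (Suc n) = i then 1 else cnt ch n i + 1)"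

definition influential_lcb_run ::
  "nat \<Rightarrow> (nat \<Rightarrow> nat \<Rightarrow> real) \<Rightarrow> (nat \<Rightarrow> real) \<Rightarrow> (nat \<Rightarrow> real) \<Rightarrow> (nat \<Rightarrow> nat) \<Rightarrow> bool" where
  "influential_lcb_run K A l1 \<xi> ch \<longleftrightarrow>
     (\<forall>t\<ge>1. ch t < K \<and>
        (\<forall>i<K. lhat A l1 \<xi> ch (t - 1) (ch t) - ereal (real (cnt ch (t - 1) (ch t)))
               \<le> lhat A l1 \<xi> ch (t - 1) i - ereal (real (cnt ch (t - 1) i))))"

definition emp_dist :: "(nat \<Rightarrow> nat) \<Rightarrow> nat \<Rightarrow> nat \<Rightarrow> real" where
  "emp_dist ch T i = real (card {t \<in> {1..T}. ch t = i}) / real T"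

definition L2 :: "nat \<Rightarrow> (nat \<Rightarrow> nat \<Rightarrow> real) \<Rightarrow> (nat \<Rightarrow> real) \<Rightarrow> real" where
  "L2 K A p = (1/2) * (\<Sum>i<K. \<Sum>j<K. p i * A i j * p j)"

definition prob_simplex :: "nat \<Rightarrow> (nat \<Rightarrow> real) set" where
  "prob_simplex K = {p. (\<forall>i<K. p i \<ge> 0) \<and> (\<Sum>i<K. p i) = 1 \<and> (\<forall>i\<ge>K. p i = 0)}"

definition sup_norm :: "nat \<Rightarrow> (nat \<Rightarrow> real) \<Rightarrow> real" where
  "sup_norm K v = Max ((\<lambda>i. \<bar>v i\<bar>) ` {..<K})"

end

theory Submission
  imports Defs
begin

locale lcb =
  fixes K :: nat and A :: "nat \<Rightarrow> nat \<Rightarrow> real" and l1 :: "nat \<Rightarrow> real"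
    and \<xi> :: "nat \<Rightarrow> real" and ch :: "nat \<Rightarrow> nat"
  assumes K_pos: "K \<ge> 1"
    and A_sym: "\<forall>i<K. \<forall>j<K. A i j = A j i"
    and A_bdd: "\<forall>i<K. \<forall>j<K. \<bar>A i j\<bar> \<le> 1"
    and noise_bdd: "\<forall>t. \<bar>\<xi> t\<bar> \<le> 1"
    and run: "influential_lcb_run K A l1 \<xi> ch"
    and A_psd: "\<forall>x :: nat \<Rightarrow> real. (\<Sum>i<K. \<Sum>j<K. x i * A i j * x j) \<ge> 0"
begin

lemma ch_Suc: "ch (Suc n) < K"
  using run unfolding influential_lcb_run_def by auto

lemma choice: "i < K \<Longrightarrow> lhat A l1 \<xi> ch n (ch (Suc n)) - ereal (real (cnt ch n (ch (Suc n))))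
   \<le> lhat A l1 \<xi> ch n i - ereal (real (cnt ch n i))"
  using run unfolding influential_lcb_run_def
  by (metis diff_Suc_1 le_add1 plus_1_eq_Suc)

definition Nc :: "nat \<Rightarrow> nat \<Rightarrow> real" where
  "Nc n i = real (card {t \<in> {1..n}. ch t = i})"

lemma Nc_0: "Nc 0 i = 0"
  unfolding Nc_def by simp

lemma Nc_Suc: "Nc (Suc n) i = Nc n i + (if ch (Suc n) = i then 1 else 0)"
proof (cases "ch (Suc n) = i")
  case True
  have "{t \<in> {1..Suc n}. ch t = i} = insert (Suc n) {t \<in> {1..n}. ch t = i}"
    using True by (auto simp: le_Suc_eq)
  then show ?thesis using True unfolding Nc_def by simp
next
  case False
  have "{t \<in> {1..Suc n}. ch t = i} = {t \<in> {1..n}. ch t = i}"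
    using False by (auto simp: le_Suc_eq)
  then show ?thesis using False unfolding Nc_def by simp
qed

lemma Nc_Suc_fun: "Nc (Suc n) = (\<lambda>i. Nc n i + (if ch (Suc n) = i then 1 else 0))"
  using Nc_Suc by auto

lemma Nc_nonneg: "Nc n i \<ge> 0"
  unfolding Nc_def by simp

lemma Nc_sum: "(\<Sum>i<K. Nc n i) = real n"
proof (induction n)
  case 0 then show ?case by (simp add: Nc_0)
next
  case (Suc n)
  have "(\<Sum>i<K. Nc (Suc n) i) = (\<Sum>i<K. Nc n i) + (\<Sum>i<K. (if ch (Suc n) = i then 1 else 0))"
    by (simp add: Nc_Suc sum.distrib)
  also have "(\<Sum>i<K. (if ch (Suc n) = i then 1 else 0) :: real) = 1"
    using ch_Suc[of n] by (simp add: sum.delta)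
  finally show ?case using Suc by simp
qed

lemma loss_eq: "loss_vec A l1 ch n j = l1 j + (\<Sum>i<K. Nc n i * A i j)"
proof (induction n)
  case 0 then show ?case by (simp add: Nc_0)
next
  case (Suc n)
  have "(\<Sum>i<K. Nc (Suc n) i * A i j) = (\<Sum>i<K. Nc n i * A i j + (if ch (Suc n) = i then A i j else 0))"
    by (rule sum.cong) (auto simp: Nc_Suc algebra_simps)
  also have "\<dots> = (\<Sum>i<K. Nc n i * A i j) + (\<Sum>i<K. (if ch (Suc n) = i then A i j else 0))"
    by (simp add: sum.distrib)
  also have "(\<Sum>i<K. (if ch (Suc n) = i then A i j else 0)) = A (ch (Suc n)) j"
    using ch_Suc[of n] by (simp add: sum.delta)
  finally show ?case using Suc by simp
qed

lemma loss_drift: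
  assumes "m \<le> n" "j < K"
  shows "\<bar>loss_vec A l1 ch n j - loss_vec A l1 ch m j\<bar> \<le> real (n - m)"
  using assms(1)
proof (induction n rule: dec_induct)
  case base then show ?case by simp
next
  case (step n)
  have "\<bar>A (ch (Suc n)) j\<bar> \<le> 1" using A_bdd ch_Suc assms(2) by blast
  then show ?case using step by (simp add: Suc_diff_le)
qed

lemma cnt_le: "cnt ch n i \<le> n"
  by (induction n) auto

lemma cnt_pos: "n \<ge> 1 \<Longrightarrow> cnt ch n i \<ge> 1"
  by (cases n) auto

lemma lhat_inv:
  "lhat A l1 \<xi> ch n i = -\<infinity> \<or> lhat A l1 \<xi> ch n i =
     ereal (loss_vec A l1 ch (n - cnt ch n i) i + \<xi> (n - cnt ch n i + 1))"
proof (induction n)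
  case 0 then show ?case by simp
next
  case (Suc n)
  then show ?case by (auto simp: obs_def)
qed

lemma played_bounds:
  assumes "lhat A l1 \<xi> ch n i \<noteq> -\<infinity>" "i < K"
  obtains x where "lhat A l1 \<xi> ch n i = ereal x"
    "loss_vec A l1 ch n i - 2 * real (cnt ch n i) - 1 \<le> x - real (cnt ch n i)"
    "x - real (cnt ch n i) \<le> loss_vec A l1 ch n i + 1"
proof -
  let ?c = "cnt ch n i"
  have e: "lhat A l1 \<xi> ch n i = ereal (loss_vec A l1 ch (n - ?c) i + \<xi> (n - ?c + 1))"
    using lhat_inv assms(1) by blast
  have "\<bar>loss_vec A l1 ch n i - loss_vec A l1 ch (n - ?c) i\<bar> \<le> real (n - (n - ?c))"
    by (rule loss_drift) (use assms in auto)
  moreover have "n - (n - ?c) = ?c" using cnt_le[of n i] by simp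
  moreover have "\<bar>\<xi> (n - ?c + 1)\<bar> \<le> 1" using noise_bdd by blast
  ultimately show ?thesis using that[OF e] by (simp add: abs_le_iff)
qed

definition U :: "nat \<Rightarrow> nat set" where
  "U n = {i. i < K \<and> lhat A l1 \<xi> ch n i = -\<infinity>}"

lemma U_Suc: "U (Suc n) = U n - {ch (Suc n)}"
proof -
  have "\<And>i. lhat A l1 \<xi> ch (Suc n) i = -\<infinity> \<longleftrightarrow> (ch (Suc n) \<noteq> i \<and> lhat A l1 \<xi> ch n i = -\<infinity>)"
    by simp
  then show ?thesis unfolding U_def by blast
qed

lemma ereal_minus_le_minf: "(x::ereal) - ereal c \<le> -\<infinity> \<Longrightarrow> x = -\<infinity>"
  by (cases x) auto

lemma U_card: "card (U n) \<le> K - n"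
proof (induction n)
  case 0
  have "U 0 \<subseteq> {..<K}" unfolding U_def by blast
  then have "card (U 0) \<le> card {..<K}" by (rule card_mono[rotated]) simp
  then show ?case by simp
next
  case (Suc n)
  let ?j = "ch (Suc n)"
  have fin: "finite (U n)" unfolding U_def by simp
  show ?case
  proof (cases "U n = {}")
    case True then show ?thesis using U_Suc[of n] by simp
  next
    case False
    then obtain i where i: "i \<in> U n" by blast
    then have iK: "i < K" and im: "lhat A l1 \<xi> ch n i = -\<infinity>" unfolding U_def by auto
    have "lhat A l1 \<xi> ch n ?j - ereal (real (cnt ch n ?j)) \<le> lhat A l1 \<xi> ch n i - ereal (real (cnt ch n i))"
      by (rule choice[OF iK])
    also have "\<dots> = -\<infinity>" using im by simp
    finally have "lhat A l1 \<xi> ch n ?j = -\<infinity>" by (rule ereal_minus_le_minf)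
    then have "?j \<in> U n" using ch_Suc[of n] unfolding U_def by blast
    then have "card (U (Suc n)) = card (U n) - 1" using U_Suc[of n] fin by (simp add: card_Diff_singleton)
    then show ?thesis using Suc.IH by linarith
  qed
qed

lemma all_played: "n \<ge> K \<Longrightarrow> i < K \<Longrightarrow> lhat A l1 \<xi> ch n i \<noteq> -\<infinity>"
proof -
  assume "n \<ge> K" "i < K"
  have "finite (U n)" unfolding U_def by auto
  moreover have "card (U n) = 0" using U_card[of n] \<open>n \<ge> K\<close> by simp
  ultimately have "U n = {}" by simp
  then show ?thesis using \<open>i < K\<close> unfolding U_def by auto
qed

lemma select_bound:
  assumes "n \<ge> K" "k < K"
  shows "loss_vec A l1 ch n (ch (Suc n)) \<le> loss_vec A l1 ch n k + 2 + 2 * real (cnt ch n (ch (Suc n)))"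
proof -
  let ?j = "ch (Suc n)"
  obtain xj where xj: "lhat A l1 \<xi> ch n ?j = ereal xj"
    "loss_vec A l1 ch n ?j - 2 * real (cnt ch n ?j) - 1 \<le> xj - real (cnt ch n ?j)"
    using played_bounds[OF all_played[OF assms(1) ch_Suc] ch_Suc] by metis
  obtain xk where xk: "lhat A l1 \<xi> ch n k = ereal xk"
    "xk - real (cnt ch n k) \<le> loss_vec A l1 ch n k + 1"
    using played_bounds[OF all_played[OF assms] assms(2)] by metis
  have "xj - real (cnt ch n ?j) \<le> xk - real (cnt ch n k)"
    using choice[OF assms(2), of n] xj(1) xk(1) by simp
  then show ?thesis using xj(2) xk(2) by simp
qed


definition Qf :: "(nat \<Rightarrow> real) \<Rightarrow> real" where
  "Qf v = (\<Sum>i<K. \<Sum>j<K. v i * A i j * v j)"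

definition Bf :: "(nat \<Rightarrow> real) \<Rightarrow> (nat \<Rightarrow> real) \<Rightarrow> real" where
  "Bf x y = (\<Sum>i<K. \<Sum>j<K. x i * A i j * y j)"

lemma Asym': "i < K \<Longrightarrow> j < K \<Longrightarrow> A i j = A j i"
  using A_sym by blast

lemma Qf_nonneg: "Qf v \<ge> 0"
  using A_psd unfolding Qf_def by blast

lemma Bf_sym: "Bf x y = Bf y x"
proof -
  have "Bf x y = (\<Sum>j<K. \<Sum>i<K. x i * A i j * y j)" unfolding Bf_def by (rule sum.swap)
  also have "\<dots> = (\<Sum>j<K. \<Sum>i<K. y j * A j i * x i)"
    by (intro sum.cong refl) (simp add: Asym')
  finally show ?thesis unfolding Bf_def .
qed

lemma Q_expand: "Qf (\<lambda>i. a * x i - y i) = a^2 * Qf x - 2 * a * Bf x y + Qf y"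
proof -
  have "Qf (\<lambda>i. a * x i - y i) = (\<Sum>i<K. \<Sum>j<K. a^2 * (x i * A i j * x j) - a * (x i * A i j * y j)
          - a * (y i * A i j * x j) + y i * A i j * y j)"
    unfolding Qf_def by (intro sum.cong refl) (simp add: algebra_simps power2_eq_square)
  also have "\<dots> = a^2 * Qf x - a * Bf x y - a * Bf y x + Qf y"
    unfolding Qf_def Bf_def by (simp add: sum.distrib sum_subtractf sum_distrib_left)
  finally show ?thesis using Bf_sym[of y x] by simp
qed

lemma convex_ineq: "2 * a * Bf x y \<le> a^2 * Qf x + Qf y"
  using Q_expand[of a x y] Qf_nonneg[of "\<lambda>i. a * x i - y i"] by linarith

lemma Q_add: "Qf (\<lambda>i. v i + d i) = Qf v + 2 * Bf v d + Qf d"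
proof -
  have "Qf (\<lambda>i. v i + d i) = (\<Sum>i<K. \<Sum>k<K. v i * A i k * v k + v i * A i k * d k + d i * A i k * v k + d i * A i k * d k)"
    unfolding Qf_def by (intro sum.cong refl) (simp add: algebra_simps)
  also have "\<dots> = Qf v + Bf v d + Bf d v + Qf d"
    unfolding Qf_def Bf_def by (simp add: sum.distrib)
  finally show ?thesis using Bf_sym[of d v] by simp
qed

lemma sum_delta_mult: "j < K \<Longrightarrow> (\<Sum>k<K. f k * (if j = k then 1 else 0)) = (f j :: real)"
proof -
  assume j: "j < K"
  have "(\<Sum>k<K. f k * (if j = k then 1 else 0)) = (\<Sum>k<K. if j = k then f k else 0)"
    by (rule sum.cong) auto
  then show ?thesis using j by (simp add: sum.delta)
qed

lemma Q_step:
  assumes j: "j < K"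
  shows "Qf (\<lambda>i. v i + (if j = i then 1 else 0)) = Qf v + 2 * (\<Sum>i<K. v i * A i j) + A j j"
proof -
  let ?d = "\<lambda>i. if j = i then 1 else 0 :: real"
  have "Bf v ?d = (\<Sum>i<K. v i * A i j)"
    unfolding Bf_def by (intro sum.cong refl) (rule sum_delta_mult[OF j])
  moreover have "Qf ?d = A j j"
  proof -
    have "Qf ?d = (\<Sum>i<K. ?d i * A i j)"
      unfolding Qf_def by (intro sum.cong refl) (rule sum_delta_mult[OF j])
    also have "\<dots> = (\<Sum>i<K. A i j * ?d i)" by (simp add: mult.commute)
    also have "\<dots> = A j j" by (rule sum_delta_mult[OF j])
    finally show ?thesis .
  qed
  ultimately show ?thesis using Q_add[of v ?d] by simp
qed

lemma Qf_le_sq: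
  assumes "\<forall>i. v i \<ge> 0"
  shows "Qf v \<le> (\<Sum>i<K. v i)^2"
proof -
  have "Qf v \<le> (\<Sum>i<K. \<Sum>j<K. v i * v j)"
    unfolding Qf_def
  proof (intro sum_mono)
    fix i j assume "i \<in> {..<K}" "j \<in> {..<K}"
    then have "A i j \<le> 1" using A_bdd abs_le_D1 by auto
    moreover have "v i * v j \<ge> 0" using assms by simp
    ultimately have "(v i * v j) * A i j \<le> (v i * v j) * 1" by (rule mult_left_mono)
    then show "v i * A i j * v j \<le> v i * v j" by (simp add: mult_ac)
  qed
  also have "\<dots> = (\<Sum>i<K. v i)^2" by (simp add: power2_eq_square sum_product)
  finally show ?thesis .
qed

definition S :: real where "S = sup_norm K l1"

lemma l1_bdd: "i < K \<Longrightarrow> \<bar>l1 i\<bar> \<le> S"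
  unfolding S_def sup_norm_def by (rule Max_ge) auto

lemma S_nonneg: "S \<ge> 0"
  using l1_bdd[of 0] K_pos by fastforce

definition G :: "(nat \<Rightarrow> real) \<Rightarrow> nat \<Rightarrow> real" where
  "G q n = Qf (Nc n) / (2 * real n) - real n * Qf q / 2"

lemma G_step:
  assumes q0: "\<forall>k<K. q k \<ge> 0" and q1: "(\<Sum>k<K. q k) = 1" and nK: "n \<ge> K"
  shows "G q (Suc n) \<le> G q n + (2 * S + 5/2 + 2 * real (cnt ch n (ch (Suc n)))) / real (Suc n)"
proof -
  define j where "j = ch (Suc n)"
  define c where "c = real (cnt ch n j)"
  define v where "v = Nc n"
  define a where "a = (\<lambda>k. \<Sum>i<K. v i * A i k)"
  define E where "E = 2 * S + 2 + 2 * c"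
  have jK: "j < K" unfolding j_def by (rule ch_Suc)
  have n1: "real n \<ge> 1" using nK K_pos by simp
  have h1: "a j \<le> a k + E" if k: "k < K" for k
  proof -
    have "loss_vec A l1 ch n j \<le> loss_vec A l1 ch n k + 2 + 2 * c"
      using select_bound[OF nK k] unfolding j_def c_def by simp
    then have "l1 j + a j \<le> l1 k + a k + 2 + 2 * c" unfolding a_def v_def by (simp add: loss_eq)
    moreover have "\<bar>l1 j\<bar> \<le> S" "\<bar>l1 k\<bar> \<le> S" using l1_bdd jK k by auto
    ultimately show ?thesis unfolding E_def by (simp add: abs_le_iff)
  qed
  define z where "z = (\<Sum>k<K. q k * a k)"
  have h2: "a j \<le> z + E"
  proof -
    have "(\<Sum>k<K. q k * a j) \<le> (\<Sum>k<K. q k * (a k + E))"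
      by (rule sum_mono) (use q0 h1 in \<open>auto intro: mult_left_mono\<close>)
    moreover have "(\<Sum>k<K. q k * a j) = a j" using q1 by (simp add: sum_distrib_right[symmetric])
    moreover have "(\<Sum>k<K. q k * (a k + E)) = z + E"
      unfolding z_def using q1 by (simp add: distrib_left sum.distrib sum_distrib_right[symmetric])
    ultimately show ?thesis by simp
  qed
  have zB: "z = Bf q v"
  proof -
    have "z = (\<Sum>k<K. \<Sum>i<K. v i * A i k * q k)"
      unfolding z_def a_def by (simp add: sum_distrib_left mult_ac)
    also have "\<dots> = Bf v q" unfolding Bf_def by (rule sum.swap)
    finally show ?thesis using Bf_sym by simp
  qed
  have h3: "2 * real n * z \<le> (real n)^2 * Qf q + Qf v"
    using convex_ineq[of "real n" q v] zB by simp
  have h4: "Qf (Nc (Suc n)) = Qf v + 2 * a j + A j j"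
    unfolding v_def a_def Nc_Suc_fun j_def[symmetric] by (rule Q_step[OF jK])
  have Ajj: "A j j \<le> 1" using A_bdd jK abs_le_D1 by blast
  define Q' where "Q' = Qf (Nc (Suc n))"
  define x where "x = Qf v"
  define y where "y = Qf q"
  have y0: "y \<ge> 0" unfolding y_def by (rule Qf_nonneg)
  have Q'b: "Q' \<le> x + 2 * z + 2 * E + 1" using h2 h4 Ajj unfolding Q'_def x_def by linarith
  have z2: "2 * z \<le> real n * y + x / real n"
  proof -
    have "2 * z = (2 * real n * z) / real n" using n1 by simp
    also have "\<dots> \<le> ((real n)^2 * y + x) / real n"
      using h3 n1 unfolding x_def y_def by (intro divide_right_mono) auto
    also have "\<dots> = real n * y + x / real n" using n1 by (simp add: field_simps power2_eq_square)
    finally show ?thesis .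
  qed
  have Q'c: "Q' \<le> x + x / real n + real n * y + 2 * E + 1" using Q'b z2 by linarith
  have "Q' / (2 * (real n + 1)) \<le> (x + x / real n + real n * y + 2 * E + 1) / (2 * (real n + 1))"
    using Q'c n1 by (intro divide_right_mono) auto
  also have "\<dots> = (x + x / real n) / (2 * (real n + 1)) + real n * y / (2 * (real n + 1)) + (2 * E + 1) / (2 * (real n + 1))"
    by (simp add: add_divide_distrib)
  also have "(x + x / real n) / (2 * (real n + 1)) = x / (2 * real n)"
  proof -
    have "x + x / real n = x * (real n + 1) / real n" using n1 by (simp add: field_simps)
    moreover have "x * (real n + 1) / real n / (2 * (real n + 1)) = x / (2 * real n)"
    proof -
      show ?thesis using n1 by (simp add: divide_simps)
    qed
    ultimately show ?thesis by simp
  qed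
  also have "(2 * E + 1) / (2 * (real n + 1)) = (E + 1/2) / (real n + 1)"
    by (simp add: field_simps)
  finally have e1: "Q' / (2 * (real n + 1)) \<le> x / (2 * real n) + real n * y / (2 * (real n + 1)) + (E + 1/2) / (real n + 1)" .
  have e3: "real n * y / (2 * (real n + 1)) \<le> y / 2"
    using y0 n1 by (simp add: field_simps)
  have "G q (Suc n) = Q' / (2 * (real n + 1)) - (real n + 1) * y / 2"
    unfolding G_def Q'_def y_def by (simp add: add.commute)
  moreover have "G q n = x / (2 * real n) - real n * y / 2"
    unfolding G_def x_def y_def v_def by simp
  moreover have "(E + 1/2) / (real n + 1) = (2 * S + 5/2 + 2 * real (cnt ch n (ch (Suc n)))) / real (Suc n)"
    unfolding E_def c_def j_def by (simp add: add.commute)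
  moreover have "(real n + 1) * y / 2 = real n * y / 2 + y / 2" by (simp add: field_simps)
  ultimately show ?thesis using e1 e3 by linarith
qed


definition phi :: "nat \<Rightarrow> real" where
  "phi s = (if s \<ge> 2 then ln (real s - 1) else -1)"

definition Psi :: "nat \<Rightarrow> real" where
  "Psi n = (\<Sum>j<K. phi (n + 1 - cnt ch n j))"

lemma phi_lower: "phi s \<ge> -1"
proof (cases "s \<ge> 2")
  case True
  then have "ln (real s - 1) \<ge> 0" by (intro ln_ge_zero) simp
  moreover have "phi s = ln (real s - 1)" unfolding phi_def using True by simp
  ultimately show ?thesis by linarith
qed (simp add: phi_def)

lemma phi_upper: "s \<le> T + 1 \<Longrightarrow> T \<ge> 1 \<Longrightarrow> phi s \<le> ln (real T)"
proof -
  assume a: "s \<le> T + 1" "T \<ge> 1"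
  have l: "ln (real T) \<ge> 0" using a by simp
  show ?thesis
  proof (cases "s \<ge> 2")
    case True
    then have "ln (real s - 1) \<le> ln (real T)" using a by (subst ln_le_cancel_iff) auto
    then show ?thesis unfolding phi_def using True by simp
  qed (use l in \<open>simp add: phi_def\<close>)
qed

lemma Psi_upper: "T \<ge> 1 \<Longrightarrow> Psi T \<le> real K * ln (real T)"
proof -
  assume T: "T \<ge> 1"
  have "Psi T \<le> (\<Sum>j<K. ln (real T))"
    unfolding Psi_def by (rule sum_mono) (rule phi_upper[OF _ T], simp)
  then show ?thesis by simp
qed

lemma Psi_lower: "Psi n \<ge> - real K"
proof -
  have "(\<Sum>j<K. (-1::real)) \<le> Psi n"
    unfolding Psi_def by (rule sum_mono) (rule phi_lower)
  then show ?thesis by simp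
qed

lemma Psi_step:
  assumes n1: "n \<ge> 1"
  shows "real (cnt ch n (ch (Suc n))) / real (Suc n) \<le> Psi (Suc n) - Psi n"
proof -
  define j where "j = ch (Suc n)"
  define c where "c = cnt ch n j"
  have jK: "j \<in> {..<K}" unfolding j_def using ch_Suc by simp
  have c1: "c \<ge> 1" "c \<le> n" unfolding c_def using cnt_pos[OF n1] cnt_le by auto
  define R where "R = (\<Sum>i\<in>{..<K} - {j}. phi (n + 1 - cnt ch n i))"
  have "Psi n = phi (n + 1 - c) + R"
    unfolding Psi_def R_def c_def by (rule sum.remove[OF _ jK]) simp
  moreover have "Psi (Suc n) = phi (n + 1) + R"
  proof -
    have "Psi (Suc n) = phi (Suc n + 1 - cnt ch (Suc n) j) + (\<Sum>i\<in>{..<K} - {j}. phi (Suc n + 1 - cnt ch (Suc n) i))"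
      unfolding Psi_def by (rule sum.remove[OF _ jK]) simp
    also have "(\<Sum>i\<in>{..<K} - {j}. phi (Suc n + 1 - cnt ch (Suc n) i)) = R"
      unfolding R_def by (intro sum.cong refl) (auto simp: j_def)
    finally show ?thesis unfolding j_def by simp
  qed
  ultimately have d: "Psi (Suc n) - Psi n = phi (n + 1) - phi (n + 1 - c)" by simp
  have pn: "phi (n + 1) = ln (real n)" unfolding phi_def using n1 by simp
  have np: "real n > 0" using n1 by simp
  show ?thesis
  proof (cases "c = n")
    case True
    then have "phi (n + 1 - c) = -1" unfolding phi_def by simp
    moreover have "ln (real n) \<ge> 0" using n1 by simp
    moreover have "real c / real (Suc n) \<le> 1" using c1 by simp
    ultimately show ?thesis using d pn unfolding c_def j_def by linarith
  next
    case False
    then have cn: "c < n" using c1 by simp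
    then have "n + 1 - c \<ge> 2" by simp
    then have "phi (n + 1 - c) = ln (real n - real c)" unfolding phi_def using cn by (simp add: of_nat_diff)
    moreover have "ln ((real n - real c) / real n) \<le> (real n - real c) / real n - 1"
      using cn by (intro ln_le_minus_one) simp
    moreover have "ln ((real n - real c) / real n) = ln (real n - real c) - ln (real n)"
      using cn np by (simp add: ln_div)
    moreover have "(real n - real c) / real n - 1 = - (real c / real n)" using np by (simp add: field_simps)
    moreover have "real c / real (Suc n) \<le> real c / real n"
      using np by (intro divide_left_mono) auto
    ultimately show ?thesis using d pn unfolding c_def j_def by linarith
  qed
qed

lemma log_step: "n \<ge> 1 \<Longrightarrow> 1 / real (Suc n) \<le> ln (real (Suc n)) - ln (real n)"
proof -
  assume n1: "n \<ge> 1"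
  have "ln (real n / real (Suc n)) \<le> real n / real (Suc n) - 1"
    using n1 by (intro ln_le_minus_one) simp
  moreover have "ln (real n / real (Suc n)) = ln (real n) - ln (real (Suc n))"
    using n1 by (simp add: ln_div)
  moreover have "real n / real (Suc n) - 1 = - (1 / real (Suc n))" by (simp add: field_simps)
  ultimately show ?thesis by linarith
qed

definition W :: "(nat \<Rightarrow> real) \<Rightarrow> nat \<Rightarrow> real" where
  "W q n = G q n - (2 * S + 5/2) * ln (real n) - 2 * Psi n"

lemma W_step:
  assumes q0: "\<forall>k<K. q k \<ge> 0" and q1: "(\<Sum>k<K. q k) = 1" and nK: "n \<ge> K"
  shows "W q (Suc n) \<le> W q n"
proof -
  have n1: "n \<ge> 1" using nK K_pos by simp
  define c where "c = real (cnt ch n (ch (Suc n)))"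
  have g: "G q (Suc n) \<le> G q n + (2 * S + 5/2) / real (Suc n) + 2 * (c / real (Suc n))"
    using G_step[OF q0 q1 nK] unfolding c_def by (simp add: add_divide_distrib)
  have "(2 * S + 5/2) * (1 / real (Suc n)) \<le> (2 * S + 5/2) * (ln (real (Suc n)) - ln (real n))"
    using log_step[OF n1] S_nonneg by (intro mult_left_mono) auto
  moreover have "c / real (Suc n) \<le> Psi (Suc n) - Psi n" using Psi_step[OF n1] unfolding c_def .
  ultimately have "(2 * S + 5/2) / real (Suc n) \<le> (2 * S + 5/2) * ln (real (Suc n)) - (2 * S + 5/2) * ln (real n)"
    "c / real (Suc n) \<le> Psi (Suc n) - Psi n"
    by (simp_all add: right_diff_distrib)
  then show ?thesis using g unfolding W_def by linarith
qed

lemma W_mono: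
  assumes q0: "\<forall>k<K. q k \<ge> 0" and q1: "(\<Sum>k<K. q k) = 1" and mn: "K \<le> m" "m \<le> n"
  shows "W q n \<le> W q m"
  using mn(2)
proof (induction n rule: dec_induct)
  case base then show ?case by simp
next
  case (step n)
  then show ?case using W_step[OF q0 q1, of n] mn(1) by simp
qed

lemma G_final:
  assumes q0: "\<forall>k<K. q k \<ge> 0" and q1: "(\<Sum>k<K. q k) = 1" and T: "T \<ge> K + 1"
  shows "G q T \<le> 5 * real K / 2 + (2 * S + 5/2 + 2 * real K) * ln (real T)"
proof -
  have w: "W q T \<le> W q K" using W_mono[OF q0 q1, of K T] T by simp
  have GK: "G q K \<le> real K / 2"
  proof -
    have "Qf (Nc K) \<le> (real K)^2" using Qf_le_sq[of "Nc K"] Nc_nonneg Nc_sum by simp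
    then have "Qf (Nc K) / (2 * real K) \<le> (real K)^2 / (2 * real K)"
      by (intro divide_right_mono) auto
    also have "\<dots> = real K / 2" using K_pos by (simp add: power2_eq_square)
    finally have "Qf (Nc K) / (2 * real K) \<le> real K / 2" .
    moreover have "real K * Qf q / 2 \<ge> 0" using Qf_nonneg by simp
    ultimately show ?thesis unfolding G_def by linarith
  qed
  have lnK: "ln (real K) \<ge> 0" using K_pos by simp
  have "(2 * S + 5/2) * ln (real K) \<ge> 0" using lnK S_nonneg by simp
  moreover have "Psi T \<le> real K * ln (real T)" using Psi_upper T by simp
  moreover have "Psi K \<ge> - real K" by (rule Psi_lower)
  ultimately show ?thesis using w GK unfolding W_def by (simp add: algebra_simps)
qed

end

theorem mainTheorem6:
  fixes K :: nat and A :: "nat \<Rightarrow> nat \<Rightarrow> real" and l1 :: "nat \<Rightarrow> real"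
    and \<xi> :: "nat \<Rightarrow> real" and ch :: "nat \<Rightarrow> nat" and T :: nat
  assumes K_pos: "K \<ge> 1"
    and A_sym: "\<forall>i<K. \<forall>j<K. A i j = A j i"
    and A_psd: "\<forall>x :: nat \<Rightarrow> real. (\<Sum>i<K. \<Sum>j<K. x i * A i j * x j) \<ge> 0"
    and A_bdd: "\<forall>i<K. \<forall>j<K. \<bar>A i j\<bar> \<le> 1"
    and noise_bdd: "\<forall>t. \<bar>\<xi> t\<bar> \<le> 1"
    and run: "influential_lcb_run K A l1 \<xi> ch"
    and T_ge: "T \<ge> K + 1"
  shows "L2 K A (emp_dist ch T) - (INF p\<in>prob_simplex K. L2 K A p)
           \<le> (5 * real K + 1) / (2 * real T)
             + (2 * real K + 2 * sup_norm K l1 + 4) * ln (real T) / real T"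
proof -
  interpret lcb K A l1 \<xi> ch
    by unfold_locales (fact K_pos A_sym A_bdd noise_bdd run A_psd)+
  define R where "R = (5 * real K + 1) / (2 * real T)
             + (2 * real K + 2 * sup_norm K l1 + 4) * ln (real T) / real T"
  have T2: "real T \<ge> 2" using T_ge K_pos by simp
  have lnT: "ln (real T) \<ge> 0" using T2 by simp
  have empN: "emp_dist ch T = (\<lambda>i. Nc T i / real T)"
    unfolding emp_dist_def Nc_def by simp
  have emp: "L2 K A (emp_dist ch T) = Qf (Nc T) / (2 * (real T)^2)"
  proof -
    have "L2 K A (emp_dist ch T) = (1/2) * (\<Sum>i<K. \<Sum>j<K. (Nc T i * A i j * Nc T j) / (real T)^2)"
      unfolding L2_def empN by (simp add: power2_eq_square)
    also have "\<dots> = Qf (Nc T) / (2 * (real T)^2)"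
      unfolding Qf_def by (simp add: sum_divide_distrib mult.commute)
    finally show ?thesis .
  qed
  have key: "L2 K A (emp_dist ch T) - R \<le> L2 K A q" if q: "q \<in> prob_simplex K" for q
  proof -
    have q0: "\<forall>k<K. q k \<ge> 0" and q1: "(\<Sum>k<K. q k) = 1"
      using q unfolding prob_simplex_def by auto
    have Lq: "L2 K A q = Qf q / 2" unfolding L2_def Qf_def by simp
    have g: "G q T \<le> 5 * real K / 2 + (2 * S + 5/2 + 2 * real K) * ln (real T)"
      by (rule G_final[OF q0 q1 T_ge])
    have "(2 * S + 5/2 + 2 * real K) * ln (real T) \<le> (2 * real K + 2 * S + 4) * ln (real T)"
      using lnT by (intro mult_right_mono) auto
    then have "5 * real K / 2 + (2 * S + 5/2 + 2 * real K) * ln (real T) \<le> (5 * real K + 1) / 2 + (2 * real K + 2 * S + 4) * ln (real T)"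
      by (intro add_mono) simp_all
    with g have g2: "G q T \<le> (5 * real K + 1) / 2 + (2 * real K + 2 * S + 4) * ln (real T)"
      by (rule order_trans)
    have "G q T / real T \<le> ((5 * real K + 1) / 2 + (2 * real K + 2 * S + 4) * ln (real T)) / real T"
      using g2 T2 by (intro divide_right_mono) auto
    also have "\<dots> = R" unfolding R_def S_def by (simp add: add_divide_distrib)
    finally have gR: "G q T / real T \<le> R" .
    have "G q T / real T = Qf (Nc T) / (2 * (real T)^2) - Qf q / 2"
      unfolding G_def using T2 by (simp add: field_simps power2_eq_square)
    then show ?thesis using gR emp Lq by linarith
  qed
  have ne: "prob_simplex K \<noteq> {}"
  proof -
    have "(\<lambda>i. if i = 0 then 1 else 0 :: real) \<in> prob_simplex K"
      unfolding prob_simplex_def using K_pos by (auto simp: sum.delta')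
    then show ?thesis by blast
  qed
  have "L2 K A (emp_dist ch T) - R \<le> (INF p\<in>prob_simplex K. L2 K A p)"
    using ne key by (intro cINF_greatest) auto
  then show ?thesis unfolding R_def by linarith
qed

end
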